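(* Under the standing assumptions below, let $\alpha>\alpha_0=5/\sqrt8$. Then $$\eta(\sigma)=\frac\pi2-\beta\Big(\frac\pi2-\sigma\Big)+o\Big(\frac\pi2-\sigma\Big)\quad\text{as }\sigma\to\pi/2^-,$$ where $\beta=\eta'(\pi/2)$ is a constant with $\beta\in[1-\alpha_0/\alpha,\,1]$ (in particular $\beta>0$).
   Context: $L^2=L^2(0,\pi/2)$ with norm $\|f\|=\big(\int_0^{\pi/2}|f|^2\big)^{1/2}$. The kernel is $K(s,\sigma)=\log\Big|\frac{\sin(s+\sigma)}{\sin(s-\sigma)}\Big|$ and $(Hw)(\sigma)=\frac1\pi\int_0^{\pi/2}K(s,\sigma)\,w(s)\,ds$. For $\alpha>0$, $\varPhi(\zeta)(\sigma)=\frac{3}{\alpha\pi}\,\frac{\sin(\sigma+\frac13(H\zeta)(\sigma))\cot\sigma}{\exp\int_0^\sigma\zeta\,ds}$, $\sigma\in(0,\pi/2]$. Standing assumptions: $\zeta_*\in L^2$ is a non-negative solution of $\zeta_*=\varPhi(\zeta_* )$ with $\|\zeta_*\|\leqslant\frac{9\sqrt\pi}2$ and $0\le\sigma+\frac13(H\zeta_* )(\sigma)\le\pi$ for $\sigma\in(0,\pi/2)$, $\theta=\frac13H\zeta_*$, and $\eta(\sigma)=\sigma+\theta(\sigma)$ (so $\eta(\pi/2)=\pi/2$). *)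

theory Defs
  imports "HOL-Analysis.Analysis" "HOL-Library.Landau_Symbols"
begin

text \<open>Functions on (0, pi/2) are represented by real functions; only their values
  on (0, pi/2) matter. Membership in L2(0, pi/2):\<close>
definition in_L2 :: "(real \<Rightarrow> real) \<Rightarrow> bool" where
  "in_L2 f \<longleftrightarrow> set_borel_measurable lborel {0<..<pi/2} f
      \<and> set_integrable lborel {0<..<pi/2} (\<lambda>s. (f s)\<^sup>2)"

definition L2norm :: "(real \<Rightarrow> real) \<Rightarrow> real" where
  "L2norm f = sqrt (LINT s:{0<..<pi/2}|lborel. (f s)\<^sup>2)"

definition Kker :: "real \<Rightarrow> real \<Rightarrow> real" where
  "Kker s \<sigma> = ln \<bar>sin (s + \<sigma>) / sin (s - \<sigma>)\<bar>"

definition Hop :: "(real \<Rightarrow> real) \<Rightarrow> real \<Rightarrow> real" where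
  "Hop w \<sigma> = (1 / pi) * (LINT s:{0<..<pi/2}|lborel. Kker s \<sigma> * w s)"

definition Phi :: "real \<Rightarrow> (real \<Rightarrow> real) \<Rightarrow> real \<Rightarrow> real" where
  "Phi \<alpha> \<zeta> \<sigma> = 3 / (\<alpha> * pi) * (sin (\<sigma> + Hop \<zeta> \<sigma> / 3) * cot \<sigma>)
      / exp (LINT s:{0<..\<sigma>}|lborel. \<zeta> s)"

definition alpha0 :: real where
  "alpha0 = 5 / sqrt 8"

end

theory Submission
  imports Defs "HOL-Real_Asymp.Real_Asymp"
begin

lemma cont_xlnx: "continuous_on UNIV (\<lambda>x::real. x * ln \<bar>x\<bar>)"
proof -
  have "isCont (\<lambda>x::real. x * ln \<bar>x\<bar>) x" for x
  proof (cases "x = 0")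
    case True
    have "((\<lambda>x::real. x * ln \<bar>x\<bar>) \<longlongrightarrow> 0) (at 0)" by real_asymp
    then show ?thesis using True by (simp add: isCont_def)
  next
    case False
    then show ?thesis by (intro continuous_intros) auto
  qed
  then show ?thesis by (simp add: continuous_at_imp_continuous_on)
qed

lemma deriv_xlnx:
  assumes "y \<noteq> c"
  shows "((\<lambda>y::real. y - (y - c) * ln \<bar>y - c\<bar>) has_real_derivative (- ln \<bar>y - c\<bar>)) (at y)"
proof (cases "y > c")
  case True
  have "((\<lambda>y::real. y - (y - c) * ln (y - c)) has_real_derivative (- ln (y - c))) (at y)"
    using True by (auto intro!: derivative_eq_intros)
  moreover have "\<forall>\<^sub>F z in nhds y. z - (z - c) * ln (z - c) = z - (z - c) * ln \<bar>z - c\<bar>"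
    using eventually_nhds_in_open[of "{c<..}" y] True by (auto elim!: eventually_mono)
  ultimately show ?thesis using True
    by (subst (asm) has_field_derivative_cong_ev[where g = "\<lambda>z. z - (z - c) * ln \<bar>z - c\<bar>"]) auto
next
  case False
  then have lt: "y < c" using assms by auto
  have "((\<lambda>y::real. y - (y - c) * ln (c - y)) has_real_derivative (- ln (c - y))) (at y)"
    using lt by (auto intro!: derivative_eq_intros) (simp add: divide_simps)
  moreover have "\<forall>\<^sub>F z in nhds y. z - (z - c) * ln (c - z) = z - (z - c) * ln \<bar>z - c\<bar>"
    using eventually_nhds_in_open[of "{..<c}" y] lt by (auto elim!: eventually_mono)
  ultimately show ?thesis using lt
    by (subst (asm) has_field_derivative_cong_ev[where g = "\<lambda>z. z - (z - c) * ln \<bar>z - c\<bar>"]) auto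
qed

lemma ln_abs_integral:
  fixes c a :: real assumes a: "0 < a" "a \<le> 1"
  shows "set_integrable lborel {c-a..c+a} (\<lambda>y. - ln \<bar>y - c\<bar>)"
    and "(LINT y:{c-a..c+a}|lborel. - ln \<bar>y - c\<bar>) = 2 * (a - a * ln a)"
proof -
  let ?F = "\<lambda>y::real. y - (y - c) * ln \<bar>y - c\<bar>"
  have cF: "continuous_on {c-a..c+a} ?F"
  proof -
    have "continuous_on UNIV (\<lambda>y::real. (y - c) * ln \<bar>y - c\<bar>)"
      using continuous_on_compose[OF continuous_on_diff[OF continuous_on_id continuous_on_const[of UNIV c]] cont_xlnx[THEN continuous_on_subset]]
      by (simp add: o_def)
    then have c2: "continuous_on {c-a..c+a} (\<lambda>y::real. (y - c) * ln \<bar>y - c\<bar>)"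
      using continuous_on_subset by blast
    show ?thesis by (rule continuous_on_diff[OF continuous_on_id c2])
  qed
  have hi: "((\<lambda>y. - ln \<bar>y - c\<bar>) has_integral (?F (c+a) - ?F (c-a))) {c-a..c+a}"
    apply (rule fundamental_theorem_of_calculus_interior_strong[of "{c}"])
    using a cF by (auto intro!: deriv_xlnx simp: has_real_derivative_iff_has_vector_derivative[symmetric])
  have val: "?F (c+a) - ?F (c-a) = 2 * (a - a * ln a)" using a by simp
  have nn: "\<And>y. y \<in> {c-a..c+a} \<Longrightarrow> 0 \<le> - ln \<bar>y - c\<bar>"
  proof -
    fix y assume "y \<in> {c-a..c+a}"
    then have "\<bar>y - c\<bar> \<le> 1" using a by auto
    then show "0 \<le> - ln \<bar>y - c\<bar>"
      by (cases "y = c") (auto simp: ln_le_zero_iff)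
  qed
  have "(\<lambda>y. - ln \<bar>y - c\<bar>) absolutely_integrable_on {c-a..c+a}"
    using hi nn by (intro nonnegative_absolutely_integrable_1) (auto simp: integrable_on_def)
  then show si: "set_integrable lborel {c-a..c+a} (\<lambda>y. - ln \<bar>y - c\<bar>)"
    unfolding set_integrable_def
    by (subst integrable_completion[symmetric]) auto
  show "(LINT y:{c-a..c+a}|lborel. - ln \<bar>y - c\<bar>) = 2 * (a - a * ln a)"
    using set_borel_integral_eq_integral(2)[OF si] hi val integral_unique by metis
qed

lemma Kker_pi2: "Kker s (pi/2) = 0"
  by (simp add: Kker_def sin_add sin_diff)

lemma Kker_nonneg:
  assumes "0 < s" "s < pi/2" "0 < \<sigma>" "\<sigma> < pi/2"
  shows "0 \<le> Kker s \<sigma>"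
proof -
  have p: "0 < sin (s + \<sigma>)" using assms by (intro sin_gt_zero) auto
  have a1: "sin (s + \<sigma>) + sin (s - \<sigma>) = 2 * sin s * cos \<sigma>" by (simp add: sin_add sin_diff)
  have a2: "sin (s + \<sigma>) - sin (s - \<sigma>) = 2 * cos s * sin \<sigma>" by (simp add: sin_add sin_diff)
  have "0 \<le> sin s * cos \<sigma>" "0 \<le> cos s * sin \<sigma>"
    using assms by (auto intro!: mult_nonneg_nonneg sin_ge_zero cos_ge_zero)
  then have le: "\<bar>sin (s - \<sigma>)\<bar> \<le> sin (s + \<sigma>)" using a1 a2 by linarith
  show ?thesis
  proof (cases "sin (s - \<sigma>) = 0")
    case True then show ?thesis by (simp add: Kker_def)
  next
    case False
    then have "1 \<le> \<bar>sin (s + \<sigma>) / sin (s - \<sigma>)\<bar>" using le p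
      by (simp add: abs_div le_divide_eq)
    then show ?thesis by (simp add: Kker_def)
  qed
qed

lemma sin_abs_lower:
  fixes y :: real assumes "\<bar>y\<bar> \<le> 1"
  shows "\<bar>y\<bar> / 2 \<le> \<bar>sin y\<bar>"
proof -
  have main: "x / 2 \<le> sin x" if "0 \<le> x" "x \<le> 1" for x :: real
  proof (cases "x = 0")
    case True then show ?thesis by simp
  next
    case False
    then have "0 < x" using that by auto
    from MVT2[OF this, of sin cos] obtain z where z: "0 < z" "z < x" "sin x - sin 0 = (x - 0) * cos z"
      by (auto intro: DERIV_sin)
    have "cos 1 \<le> cos z" using z that pi_gt3 by (intro cos_monotone_0_pi_le) auto
    moreover have "cos (pi/3) \<le> cos 1" using pi_gt3 by (intro cos_monotone_0_pi_le) auto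
    ultimately have "1/2 \<le> cos z" by (simp add: cos_60)
    then show ?thesis using z \<open>0 < x\<close> by (simp add: mult_left_mono[of "1/2" "cos z" x])
  qed
  show ?thesis
  proof (cases "y \<ge> 0")
    case True then show ?thesis using main[of y] assms by auto
  next
    case False then show ?thesis using main[of "-y"] assms by auto
  qed
qed

lemma D1_core:
  fixes a t :: real
  assumes t: "0 < t" and at: "2 * t \<le> a" and a: "a < pi/2"
  shows "0 \<le> ln (sin (a + t) / sin (a - t)) * (sin a / cos a) / t"
    and "ln (sin (a + t) / sin (a - t)) * (sin a / cos a) / t \<le> 4"
proof -
  have sat: "0 < sin (a - t)" using assms by (intro sin_gt_zero) auto
  have sapt: "0 < sin (a + t)" using assms by (intro sin_gt_zero) auto
  have ca: "0 < cos a" using assms by (intro cos_gt_zero) auto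
  have sa: "0 < sin a" using assms by (intro sin_gt_zero) auto
  have ct: "0 \<le> cos t" using assms by (intro cos_ge_zero) auto
  have st: "0 < sin t" using assms by (intro sin_gt_zero) auto
  have diff: "sin (a + t) - sin (a - t) = 2 * cos a * sin t" by (simp add: sin_add sin_diff)
  have "0 \<le> 2 * cos a * sin t" using ca st by simp
  then have r1: "1 \<le> sin (a + t) / sin (a - t)" using diff sat by (simp add: le_divide_eq)
  then have lnn: "0 \<le> ln (sin (a + t) / sin (a - t))" by simp
  show "0 \<le> ln (sin (a + t) / sin (a - t)) * (sin a / cos a) / t"
    using lnn sa ca t by simp
  have "ln (sin (a + t) / sin (a - t)) \<le> sin (a + t) / sin (a - t) - 1"
    using r1 by (intro ln_le_minus_one) auto
  also have "\<dots> = 2 * cos a * sin t / sin (a - t)" using diff sat by (simp add: field_simps)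
  finally have l1: "ln (sin (a + t) / sin (a - t)) \<le> 2 * cos a * sin t / sin (a - t)" .
  have h1: "sin t \<le> sin (a - t)" using assms by (intro sin_monotone_2pi_le) auto
  have h2: "sin a = sin (a - t) * cos t + cos (a - t) * sin t"
    using sin_add[of "a - t" t] by simp
  have h3: "cos t \<le> 1" "cos (a - t) \<le> 1" by auto
  have h4: "0 \<le> cos (a - t)" using assms by (intro cos_ge_zero) auto
  have h5: "sin (a - t) * cos t \<le> sin (a - t) * 1"
    by (rule mult_left_mono[OF h3(1)]) (use sat in linarith)
  have h6: "cos (a - t) * sin t \<le> 1 * sin t"
    by (rule mult_right_mono[OF h3(2)]) (use st in linarith)
  have sa2: "sin a \<le> 2 * sin (a - t)" using h1 h2 h5 h6 by linarith
  have stt: "sin t \<le> t" using t by (intro sin_x_le_x) auto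
  have "ln (sin (a + t) / sin (a - t)) * (sin a / cos a) / t
        \<le> (2 * cos a * sin t / sin (a - t)) * (sin a / cos a) / t"
    using l1 sa ca t by (intro divide_right_mono mult_right_mono) auto
  also have "\<dots> = 2 * (sin t / t) * (sin a / sin (a - t))"
    using ca sat t by (simp add: field_simps)
  also have "\<dots> \<le> 2 * 1 * 2"
  proof (intro mult_mono)
    show "sin t / t \<le> 1" using stt t by simp
    show "sin a / sin (a - t) \<le> 2" using sa2 sat by (simp add: divide_le_eq)
  qed (use st t sa sat in auto)
  finally show "ln (sin (a + t) / sin (a - t)) * (sin a / cos a) / t \<le> 4" by simp
qed

lemma Kker_D1:
  assumes "0 < s" "s \<le> 2 * \<sigma> - pi/2" "\<sigma> < pi/2"
  shows "0 \<le> Kker s \<sigma> * cot s / (pi/2 - \<sigma>)" "Kker s \<sigma> * cot s / (pi/2 - \<sigma>) \<le> 4"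
proof -
  define a where "a = pi/2 - s"
  define t where "t = pi/2 - \<sigma>"
  have t: "0 < t" "2 * t \<le> a" "a < pi/2" using assms by (auto simp: a_def t_def)
  have s1: "sin (s + \<sigma>) = sin (a + t)"
  proof -
    have "s + \<sigma> = pi - (a + t)" by (simp add: a_def t_def)
    then show ?thesis by simp
  qed
  have s2: "sin (s - \<sigma>) = - sin (a - t)"
  proof -
    have "s - \<sigma> = - (a - t)" by (simp add: a_def t_def)
    then show ?thesis by (metis sin_minus)
  qed
  have sat: "0 < sin (a - t)" using t by (intro sin_gt_zero) auto
  have sapt: "0 < sin (a + t)" using t by (intro sin_gt_zero) auto
  have K: "Kker s \<sigma> = ln (sin (a + t) / sin (a - t))"
    using sat sapt by (simp add: Kker_def s1 s2 abs_div)
  have c1: "sin a = cos s" unfolding a_def by (simp add: sin_cos_eq)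
  have c2: "cos a = sin s" unfolding a_def by (simp add: cos_sin_eq)
  have c: "cot s = sin a / cos a" by (simp add: cot_def c1 c2)
  show "0 \<le> Kker s \<sigma> * cot s / (pi/2 - \<sigma>)" "Kker s \<sigma> * cot s / (pi/2 - \<sigma>) \<le> 4"
    unfolding K c t_def[symmetric] by (rule D1_core(1)[OF t], rule D1_core(2)[OF t])
qed

lemma Kker_D2:
  assumes s: "\<sigma> - (pi/2 - \<sigma>) \<le> s" "s < pi/2" "s \<noteq> \<sigma>" and sg: "\<sigma> < pi/2" "pi/2 - \<sigma> \<le> 1/10"
  shows "0 \<le> Kker s \<sigma> * cot s / (pi/2 - \<sigma>)"
    and "Kker s \<sigma> * cot s / (pi/2 - \<sigma>) \<le> 3 * (ln (6 * (pi/2 - \<sigma>)) - ln \<bar>s - \<sigma>\<bar>)"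
proof -
  define t where "t = pi/2 - \<sigma>"
  have t: "0 < t" "t \<le> 1/10" using sg by (auto simp: t_def)
  have sd: "\<bar>s - \<sigma>\<bar> \<le> t" "0 < \<bar>s - \<sigma>\<bar>" using s by (auto simp: t_def)
  have pi4: "pi/4 > 0.2" using pi_gt3 by simp
  have s0: "0 < s" using s t pi4 by (auto simp: t_def)
  have sig0: "0 < \<sigma>" using t pi4 by (auto simp: t_def)
  have spos: "0 < sin (s + \<sigma>)" using s sg s0 sig0 by (intro sin_gt_zero) auto
  have sup: "sin (s + \<sigma>) \<le> 3 * t"
  proof -
    have "sin (s + \<sigma>) = sin (pi - (s + \<sigma>))" by simp
    also have "\<dots> \<le> pi - (s + \<sigma>)" using s sg by (intro sin_x_le_x) auto
    also have "\<dots> \<le> 3 * t" using s by (simp add: t_def)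
    finally show ?thesis .
  qed
  have slow: "\<bar>s - \<sigma>\<bar> / 2 \<le> \<bar>sin (s - \<sigma>)\<bar>" using sd t by (intro sin_abs_lower) auto
  have sne: "sin (s - \<sigma>) \<noteq> 0" using slow sd by auto
  have Kn: "0 \<le> Kker s \<sigma>" using s0 s sig0 sg by (intro Kker_nonneg) auto
  have "Kker s \<sigma> = ln (sin (s + \<sigma>) / \<bar>sin (s - \<sigma>)\<bar>)"
    using spos by (simp add: Kker_def abs_div)
  also have "\<dots> \<le> ln ((3 * t) / (\<bar>s - \<sigma>\<bar> / 2))"
    using spos sne slow sup sd by (intro ln_mono frac_le) auto
  also have "\<dots> = ln (6 * t) - ln \<bar>s - \<sigma>\<bar>"
    using t sd by (simp add: ln_div)
  finally have Kb: "Kker s \<sigma> \<le> ln (6 * t) - ln \<bar>s - \<sigma>\<bar>" .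
  have cs: "cos s \<le> 2 * t"
  proof -
    have "cos s = sin (pi/2 - s)" by (simp add: sin_cos_eq)
    also have "\<dots> \<le> pi/2 - s" using s by (intro sin_x_le_x) auto
    finally show ?thesis using s by (simp add: t_def)
  qed
  have cs0: "0 \<le> cos s" using s s0 by (intro cos_ge_zero) auto
  have ss: "2/3 \<le> sin s"
  proof -
    have "cos (pi/4) \<le> cos (pi/2 - s)" using s t pi4 by (intro cos_monotone_0_pi_le) (auto simp: t_def)
    moreover have "2/3 \<le> sqrt 2 / 2"
    proof -
      have "(4/3::real) \<le> sqrt 2" by (rule real_le_rsqrt) (simp add: power2_eq_square)
      then show ?thesis by simp
    qed
    ultimately show ?thesis by (simp add: cos_45 cos_sin_eq sin_45)
  qed
  have cot: "0 \<le> cot s" "cot s \<le> 3 * t"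
  proof -
    show "0 \<le> cot s" using cs0 ss by (simp add: cot_def)
    have "cot s = cos s / sin s" by (simp add: cot_def)
    also have "\<dots> \<le> (2 * t) / (2/3)" using cs cs0 ss by (intro frac_le) auto
    finally show "cot s \<le> 3 * t" by simp
  qed
  show "0 \<le> Kker s \<sigma> * cot s / (pi/2 - \<sigma>)" using Kn cot t by (simp add: t_def[symmetric])
  have "Kker s \<sigma> * cot s / t \<le> Kker s \<sigma> * (3 * t) / t"
    using Kn cot t by (intro divide_right_mono mult_left_mono) auto
  also have "\<dots> = 3 * Kker s \<sigma>" using t by simp
  also have "\<dots> \<le> 3 * (ln (6 * t) - ln \<bar>s - \<sigma>\<bar>)" using Kb by simp
  finally show "Kker s \<sigma> * cot s / (pi/2 - \<sigma>) \<le> 3 * (ln (6 * (pi/2 - \<sigma>)) - ln \<bar>s - \<sigma>\<bar>)"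
    by (simp add: t_def)
qed

lemma Kker_meas[measurable]: "(\<lambda>s. Kker s \<sigma>) \<in> borel_measurable borel"
  unfolding Kker_def by measurable

lemma sin_meas[measurable]: "(sin :: real \<Rightarrow> real) \<in> borel_measurable borel"
  by (rule borel_measurable_continuous_onI[OF continuous_on_sin[OF continuous_on_id]])

lemma cos_meas[measurable]: "(cos :: real \<Rightarrow> real) \<in> borel_measurable borel"
  by (rule borel_measurable_continuous_onI[OF continuous_on_cos[OF continuous_on_id]])

lemma cot_meas[measurable]: "(cot :: real \<Rightarrow> real) \<in> borel_measurable borel"
  unfolding cot_def by measurable

lemma tan_meas[measurable]: "(tan :: real \<Rightarrow> real) \<in> borel_measurable borel"
  unfolding tan_def by measurable

lemma kk_lim:
  assumes x: "0 < x" "x < pi/2"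
  shows "((\<lambda>\<sigma>. Kker x \<sigma> * cot x / (pi/2 - \<sigma>)) \<longlongrightarrow> 2) (at_left (pi/2))"
proof -
  define h where "h = (\<lambda>\<sigma>. ln (sin (x + \<sigma>)) - ln (- sin (x - \<sigma>)))"
  have cx: "0 < cos x" using x by (intro cos_gt_zero) auto
  have sx: "0 < sin x" using x by (intro sin_gt_zero) auto
  have h0: "h (pi/2) = 0" by (simp add: h_def sin_add sin_diff)
  have "(h has_real_derivative (- 2 * tan x)) (at (pi/2))"
    unfolding h_def using cx
    by (auto intro!: derivative_eq_intros simp: sin_add sin_diff cos_add cos_diff tan_def)
  then have d: "(h has_real_derivative (- 2 * tan x)) (at_left (pi/2))"
    by (rule has_field_derivative_at_within)
  then have q: "((\<lambda>\<sigma>. (h \<sigma> - h (pi/2)) / (\<sigma> - pi/2)) \<longlongrightarrow> - 2 * tan x) (at_left (pi/2))"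
    by (simp add: has_field_derivative_iff)
  then have q2: "((\<lambda>\<sigma>. - ((h \<sigma> - h (pi/2)) / (\<sigma> - pi/2)) * cot x) \<longlongrightarrow> - (- 2 * tan x) * cot x) (at_left (pi/2))"
    by (intro tendsto_intros)
  have lim: "- (- 2 * tan x) * cot x = 2" using cx sx by (simp add: tan_def cot_def)
  have ev: "\<forall>\<^sub>F \<sigma> in at_left (pi/2). - ((h \<sigma> - h (pi/2)) / (\<sigma> - pi/2)) * cot x = Kker x \<sigma> * cot x / (pi/2 - \<sigma>)"
  proof -
    have "\<forall>\<^sub>F \<sigma> in at_left (pi/2). \<sigma> \<in> {x<..<pi/2}" using x by (intro eventually_at_left_real) auto
    then show ?thesis
    proof eventually_elim
      case (elim \<sigma>)
      have a: "0 < sin (x + \<sigma>)" using elim x by (intro sin_gt_zero) auto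
      have b: "sin (x - \<sigma>) < 0"
      proof -
        have "0 < sin (\<sigma> - x)" using elim x by (intro sin_gt_zero) auto
        moreover have "sin (x - \<sigma>) = - sin (\<sigma> - x)" by (metis minus_diff_eq sin_minus)
        ultimately show ?thesis by simp
      qed
      have ab: "\<bar>sin (x + \<sigma>) / sin (x - \<sigma>)\<bar> = sin (x + \<sigma>) / (- sin (x - \<sigma>))"
        using a b by (simp add: abs_div)
      have "Kker x \<sigma> = ln (sin (x + \<sigma>) / (- sin (x - \<sigma>)))"
        unfolding Kker_def by (rule arg_cong[where f=ln]) (rule ab)
      also have "\<dots> = h \<sigma>" unfolding h_def using a b by (subst ln_div) auto
      finally have "Kker x \<sigma> = h \<sigma>" .
      then show ?case using elim h0 by (simp add: field_simps)
    qed
  qed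
  show ?thesis using Lim_transform_eventually[OF q2 ev] unfolding lim .
qed

lemma zeta_tan_bound:
  fixes \<alpha> :: real and \<zeta> :: "real \<Rightarrow> real"
  assumes alpha_pos: "\<alpha> > 0"
    and nonneg: "AE s in lborel. s \<in> {0<..<pi/2} \<longrightarrow> \<zeta> s \<ge> 0"
    and fixpt: "AE s in lborel. s \<in> {0<..<pi/2} \<longrightarrow> \<zeta> s = Phi \<alpha> \<zeta> s"
  shows "AE s in lborel. s \<in> {0<..<pi/2} \<longrightarrow> 0 \<le> \<zeta> s * tan s \<and> \<zeta> s * tan s \<le> 3 / (\<alpha> * pi)"
  using nonneg fixpt
proof eventually_elim
  case (elim s)
  show ?case
  proof
    assume s: "s \<in> {0<..<pi/2}"
    have cs: "0 < cos s" "0 < sin s" using s by (auto intro!: cos_gt_zero sin_gt_zero)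
    have tp: "0 < tan s" using s by (intro tan_gt_zero) auto
    define I where "I = (LINT u:{0<..s}|lborel. \<zeta> u)"
    have I0: "0 \<le> I"
      unfolding I_def set_lebesgue_integral_def
    proof (rule integral_nonneg_AE)
      show "AE x in lborel. 0 \<le> indicator {0<..s} x *\<^sub>R \<zeta> x"
        using nonneg
      proof eventually_elim
        case (elim x)
        then show ?case using s by (auto simp: indicator_def)
      qed
    qed
    have e1: "1 \<le> exp I" using I0 by simp
    define y where "y = sin (s + Hop \<zeta> s / 3)"
    have eq: "\<zeta> s * tan s = 3 / (\<alpha> * pi) * (y / exp I)"
      using elim(2) s cs unfolding Phi_def y_def I_def
      by (simp add: tan_def cot_def field_simps)
    have "y \<le> exp I" using e1 sin_le_one[of "s + Hop \<zeta> s / 3"] unfolding y_def by linarith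
    then have "y / exp I \<le> 1" by (simp add: divide_le_eq)
    then have "3 / (\<alpha> * pi) * (y / exp I) \<le> 3 / (\<alpha> * pi) * 1"
      using alpha_pos by (intro mult_left_mono) auto
    then have z1: "\<zeta> s * tan s \<le> 3 / (\<alpha> * pi)" unfolding eq by simp
    have z0: "0 \<le> \<zeta> s * tan s" using elim(1) s tp by simp
    show "0 \<le> \<zeta> s * tan s \<and> \<zeta> s * tan s \<le> 3 / (\<alpha> * pi)"
      using z0 z1 by blast
  qed
qed

theorem theorem4p8:
  fixes \<alpha> :: real and \<zeta> :: "real \<Rightarrow> real" and \<eta> :: "real \<Rightarrow> real"
  assumes alpha_pos: "\<alpha> > 0"
    and L2: "in_L2 \<zeta>"
    and nonneg: "AE s in lborel. s \<in> {0<..<pi/2} \<longrightarrow> \<zeta> s \<ge> 0"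
    and fixpt: "AE s in lborel. s \<in> {0<..<pi/2} \<longrightarrow> \<zeta> s = Phi \<alpha> \<zeta> s"
    and norm_bd: "L2norm \<zeta> \<le> 9 * sqrt pi / 2"
    and eta_def: "\<eta> = (\<lambda>\<sigma>. \<sigma> + Hop \<zeta> \<sigma> / 3)"
    and eta_range: "\<And>\<sigma>. \<sigma> \<in> {0<..<pi/2} \<Longrightarrow> 0 \<le> \<eta> \<sigma> \<and> \<eta> \<sigma> \<le> pi"
    and alpha_gt: "\<alpha> > alpha0"
  shows "\<exists>\<beta>. (\<eta> has_real_derivative \<beta>) (at_left (pi/2))
           \<and> 1 - alpha0 / \<alpha> \<le> \<beta> \<and> \<beta> \<le> 1
           \<and> (\<lambda>\<sigma>. \<eta> \<sigma> - (pi/2 - \<beta> * (pi/2 - \<sigma>))) \<in> o[at_left (pi/2)](\<lambda>\<sigma>. pi/2 - \<sigma>)"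
proof -
  define S where "S = {0<..<pi/2::real}"
  define C where "C = 3 / (\<alpha> * pi)"
  have C0: "0 < C" using alpha_pos by (simp add: C_def)
  define g where "g = (\<lambda>s. indicator S s * \<zeta> s * tan s)"
  have zmeas: "(\<lambda>s. indicator S s * \<zeta> s) \<in> borel_measurable lborel"
    using L2 unfolding in_L2_def set_borel_measurable_def S_def by simp
  have gmeas[measurable]: "g \<in> borel_measurable lborel"
    unfolding g_def using zmeas by measurable
  have gz: "\<And>s. s \<notin> S \<Longrightarrow> g s = 0" by (simp add: g_def)
  have gb: "AE s in lborel. 0 \<le> g s \<and> g s \<le> C"
    using zeta_tan_bound[OF alpha_pos nonneg fixpt]
  proof eventually_elim
    case (elim s)
    then show ?case using C0 by (cases "s \<in> S") (auto simp: g_def S_def C_def)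
  qed
  have intS: "integrable lborel (\<lambda>s. indicator S s :: real)"
    by (simp add: integrable_indicator_iff S_def)
  have gint: "integrable lborel g"
  proof (rule Bochner_Integration.integrable_bound[OF integrable_mult_left[OF intS, of C] gmeas])
    show "AE x in lborel. norm (g x) \<le> norm (indicator S x * C)"
      using gb by eventually_elim (use C0 gz in \<open>auto simp: indicator_def\<close>)
  qed

  define kk where "kk \<sigma> s = Kker s \<sigma> * cot s / (pi/2 - \<sigma>)" for \<sigma> s
  define Q where "Q \<sigma> = (LINT s|lborel. kk \<sigma> s * g s)" for \<sigma>
  define G where "G = (LINT s|lborel. g s)"
  have Hq: "Hop \<zeta> \<sigma> = (pi/2 - \<sigma>) * Q \<sigma> / pi" if \<sigma>: "0 < \<sigma>" "\<sigma> < pi/2" for \<sigma>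
  proof -
    have "(LINT s:S|lborel. Kker s \<sigma> * \<zeta> s) = (LINT s|lborel. (pi/2 - \<sigma>) * (kk \<sigma> s * g s))"
      unfolding set_lebesgue_integral_def
    proof (rule Bochner_Integration.integral_cong[OF refl])
      fix s
      show "indicator S s *\<^sub>R (Kker s \<sigma> * \<zeta> s) = (pi/2 - \<sigma>) * (kk \<sigma> s * g s)"
      proof (cases "s \<in> S")
        case True
        then have "0 < cos s" "0 < sin s" by (auto simp: S_def intro!: cos_gt_zero sin_gt_zero)
        then show ?thesis using True \<sigma> by (simp add: kk_def g_def cot_def tan_def field_simps)
      next
        case False then show ?thesis by (simp add: g_def)
      qed
    qed
    also have "\<dots> = (pi/2 - \<sigma>) * Q \<sigma>" by (simp add: Q_def)
    finally have "(LINT s:{0<..<pi/2}|lborel. Kker s \<sigma> * \<zeta> s) = (pi/2 - \<sigma>) * Q \<sigma>"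
      by (simp add: S_def)
    then show ?thesis unfolding Hop_def by simp
  qed
  have H0: "Hop \<zeta> (pi/2) = 0" by (simp add: Hop_def Kker_pi2)
  have eta_pi2: "\<eta> (pi/2) = pi/2" using H0 eta_def by simp
  have quot: "(\<eta> \<sigma> - \<eta> (pi/2)) / (\<sigma> - pi/2) = 1 - Q \<sigma> / (3*pi)" if \<sigma>: "0 < \<sigma>" "\<sigma> < pi/2" for \<sigma>
  proof -
    have ne: "\<sigma> - pi/2 \<noteq> 0" using \<sigma> by simp
    have "\<eta> \<sigma> - \<eta> (pi/2) = (\<sigma> - pi/2) * (1 - Q \<sigma> / (3*pi))"
      using Hq[OF \<sigma>] eta_pi2 unfolding eta_def by (simp add: field_simps)
    then show ?thesis using ne by simp
  qed
  have ev0: "\<forall>\<^sub>F \<sigma> in at_left (pi/2). \<sigma> \<in> {0<..<pi/2::real}"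
    by (rule eventually_at_left_real) simp
  have Qlim: "(Q \<longlongrightarrow> 2 * G) (at_left (pi/2))"
  proof -
    define b where "b = pi/2 - 1/10"
    have bpi: "pi/4 < b" using pi_gt3 by (simp add: b_def)
    have bl: "b < pi/2" by (simp add: b_def)
    define F1 where "F1 \<sigma> s = indicator {0<..<2*\<sigma> - pi/2} s * (kk \<sigma> s * g s)" for \<sigma> s
    define F2 where "F2 \<sigma> s = indicator {2*\<sigma> - pi/2..} s * (kk \<sigma> s * g s)" for \<sigma> s
    define w1 where "w1 s = indicator S s * (4 * C)" for s
    define w2 where "w2 \<sigma> s = indicator {\<sigma> - (pi/2 - \<sigma>)..\<sigma> + (pi/2 - \<sigma>)} s
        * (3 * C * (ln (6 * (pi/2 - \<sigma>)) - ln \<bar>s - \<sigma>\<bar>))" for \<sigma> s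
    have split: "kk \<sigma> s * g s = F1 \<sigma> s + F2 \<sigma> s" if "\<sigma> < pi/2" for \<sigma> s
    proof (cases "s \<in> S")
      case True
      then show ?thesis using that by (auto simp: F1_def F2_def S_def indicator_def)
    next
      case False
      then show ?thesis by (simp add: F1_def F2_def gz)
    qed
    have F1m[measurable]: "F1 \<sigma> \<in> borel_measurable lborel" for \<sigma>
      unfolding F1_def kk_def by measurable
    have F2m[measurable]: "F2 \<sigma> \<in> borel_measurable lborel" for \<sigma>
      unfolding F2_def kk_def by measurable
    have w1int: "integrable lborel w1" unfolding w1_def by (intro integrable_mult_left intS)
    have bound1: "AE s in lborel. norm (F1 \<sigma> s) \<le> w1 s" if \<sigma>: "b < \<sigma>" "\<sigma> < pi/2" for \<sigma>
      using gb
    proof eventually_elim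
      case (elim s)
      show ?case
      proof (cases "s \<in> {0<..<2*\<sigma> - pi/2}")
        case True
        then have sS: "s \<in> S" using \<sigma> by (auto simp: S_def)
        have k: "0 \<le> kk \<sigma> s" "kk \<sigma> s \<le> 4" unfolding kk_def
          using Kker_D1[of s \<sigma>] True \<sigma> by auto
        have "kk \<sigma> s * g s \<le> 4 * C" using k elim by (intro mult_mono) auto
        moreover have "0 \<le> kk \<sigma> s * g s" using k elim by simp
        ultimately show ?thesis using True sS by (simp add: F1_def w1_def)
      next
        case False
        then show ?thesis using C0 by (simp add: F1_def w1_def)
      qed
    qed
    have F1int: "integrable lborel (F1 \<sigma>)" if "b < \<sigma>" "\<sigma> < pi/2" for \<sigma>
      by (rule Bochner_Integration.integrable_bound[OF w1int F1m])
        (use bound1[OF that] in \<open>auto elim!: eventually_mono\<close>)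
    have w2int: "integrable lborel (w2 \<sigma>)"
      and w2val: "(LINT s|lborel. w2 \<sigma> s) = 6 * C * (ln 6 + 1) * (pi/2 - \<sigma>)"
      if \<sigma>: "b < \<sigma>" "\<sigma> < pi/2" for \<sigma>
    proof -
      define t where "t = pi/2 - \<sigma>"
      have t: "0 < t" "t \<le> 1" using \<sigma> by (auto simp: t_def b_def)
      define I where "I = {\<sigma> - t..\<sigma> + t}"
      have li: "set_integrable lborel I (\<lambda>y. - ln \<bar>y - \<sigma>\<bar>)"
        "(LINT y:I|lborel. - ln \<bar>y - \<sigma>\<bar>) = 2 * (t - t * ln t)"
        using ln_abs_integral[OF t, of \<sigma>] by (simp_all add: I_def)
      have intI: "integrable lborel (\<lambda>s. indicator I s :: real)"
        using t by (simp add: integrable_indicator_iff I_def)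
      have mI: "measure lborel I = 2 * t" using t by (simp add: I_def)
      have eq: "w2 \<sigma> = (\<lambda>s. indicator I s * (3 * C * ln (6 * t))
          + (3 * C) * (indicator I s *\<^sub>R (- ln \<bar>s - \<sigma>\<bar>)))"
        by (rule ext) (simp add: w2_def I_def t_def algebra_simps)
      have i1: "integrable lborel (\<lambda>s. indicator I s * (3 * C * ln (6 * t)))"
        by (intro integrable_mult_left intI)
      have i2: "integrable lborel (\<lambda>s. (3 * C) * (indicator I s *\<^sub>R (- ln \<bar>s - \<sigma>\<bar>)))"
        using li(1) unfolding set_integrable_def by (intro integrable_mult_right)
      show "integrable lborel (w2 \<sigma>)" unfolding eq using i1 i2 by (rule Bochner_Integration.integrable_add)
      have "(LINT s|lborel. w2 \<sigma> s) = measure lborel I * (3 * C * ln (6 * t)) + 3 * C * (2 * (t - t * ln t))"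
        unfolding eq using i1 i2 li(2)
        by (simp add: Bochner_Integration.integral_add set_lebesgue_integral_def) (metis mult_minus_right)
      also have "\<dots> = 6 * C * (ln 6 + 1) * t"
        using t by (simp add: mI ln_mult algebra_simps)
      finally show "(LINT s|lborel. w2 \<sigma> s) = 6 * C * (ln 6 + 1) * (pi/2 - \<sigma>)" by (simp add: t_def)
    qed
    have bound2: "AE s in lborel. norm (F2 \<sigma> s) \<le> w2 \<sigma> s" if \<sigma>: "b < \<sigma>" "\<sigma> < pi/2" for \<sigma>
      using gb AE_lborel_singleton[of \<sigma>]
    proof eventually_elim
      case (elim s)
      define t where "t = pi/2 - \<sigma>"
      have t: "0 < t" "t \<le> 1/10" using \<sigma> by (auto simp: t_def b_def)
      have L0: "0 \<le> ln (6 * t) - ln \<bar>s - \<sigma>\<bar>" if "\<bar>s - \<sigma>\<bar> \<le> t"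
      proof -
        have "ln \<bar>s - \<sigma>\<bar> \<le> ln (6 * t)" using that elim(2) t by (intro ln_mono) auto
        then show ?thesis by simp
      qed
      have w0: "0 \<le> w2 \<sigma> s"
        using L0 C0 by (auto simp: w2_def t_def[symmetric] indicator_def abs_le_iff)
      show ?case
      proof (cases "s \<in> S \<and> 2*\<sigma> - pi/2 \<le> s")
        case True
        then have s: "\<sigma> - (pi/2 - \<sigma>) \<le> s" "s < pi/2" by (auto simp: S_def)
        have k: "0 \<le> kk \<sigma> s" "kk \<sigma> s \<le> 3 * (ln (6 * (pi/2 - \<sigma>)) - ln \<bar>s - \<sigma>\<bar>)"
          unfolding kk_def using Kker_D2[OF s elim(2) \<sigma>(2)] \<sigma> by (auto simp: b_def)
        have "kk \<sigma> s * g s \<le> 3 * (ln (6 * (pi/2 - \<sigma>)) - ln \<bar>s - \<sigma>\<bar>) * C"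
          using k elim by (intro mult_mono) auto
        moreover have "0 \<le> kk \<sigma> s * g s" using k elim by simp
        moreover have "s \<in> {\<sigma> - (pi/2 - \<sigma>)..\<sigma> + (pi/2 - \<sigma>)}" using s by auto
        ultimately show ?thesis using True by (simp add: F2_def w2_def algebra_simps)
      next
        case False
        then have "F2 \<sigma> s = 0" by (auto simp: F2_def gz)
        then show ?thesis using w0 by simp
      qed
    qed
    have F2int: "integrable lborel (F2 \<sigma>)" if "b < \<sigma>" "\<sigma> < pi/2" for \<sigma>
      by (rule Bochner_Integration.integrable_bound[OF w2int[OF that] F2m])
        (use bound2[OF that] in \<open>auto elim!: eventually_mono\<close>)
    have F2bd: "norm (LINT s|lborel. F2 \<sigma> s) \<le> 6 * C * (ln 6 + 1) * (pi/2 - \<sigma>)"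
      if "b < \<sigma>" "\<sigma> < pi/2" for \<sigma>
    proof -
      have "norm (LINT s|lborel. F2 \<sigma> s) \<le> (LINT s|lborel. norm (F2 \<sigma> s))"
        by (rule Bochner_Integration.integral_norm_bound)
      also have "\<dots> \<le> (LINT s|lborel. w2 \<sigma> s)"
        by (intro integral_mono_AE integrable_norm F2int w2int that bound2)
      finally show ?thesis using w2val[OF that] by simp
    qed
    have evb: "\<forall>\<^sub>F \<sigma> in at_left (pi/2). \<sigma> \<in> {b<..<pi/2}"
      by (rule eventually_at_left_real) (rule bl)
    have lim2: "((\<lambda>\<sigma>. LINT s|lborel. F2 \<sigma> s) \<longlongrightarrow> 0) (at_left (pi/2))"
    proof (rule Lim_null_comparison)
      show "\<forall>\<^sub>F \<sigma> in at_left (pi/2). norm (LINT s|lborel. F2 \<sigma> s) \<le> 6 * C * (ln 6 + 1) * (pi/2 - \<sigma>)"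
        using evb by (rule eventually_mono) (use F2bd in auto)
      have "((\<lambda>\<sigma>. 6 * C * (ln 6 + 1) * (pi/2 - \<sigma>)) \<longlongrightarrow> 6 * C * (ln 6 + 1) * (pi/2 - pi/2)) (at_left (pi/2))"
        by (intro tendsto_intros)
      then show "((\<lambda>\<sigma>. 6 * C * (ln 6 + 1) * (pi/2 - \<sigma>)) \<longlongrightarrow> 0) (at_left (pi/2))" by simp
    qed
    have lim1: "((\<lambda>\<sigma>. LINT s|lborel. F1 \<sigma> s) \<longlongrightarrow> 2 * G) (at_left (pi/2))"
    proof (rule tendsto_at_left_sequentially[OF bl])
      fix Sq :: "nat \<Rightarrow> real"
      assume Sq: "\<And>n. Sq n < pi/2" "\<And>n. b < Sq n" "incseq Sq" "Sq \<longlonglongrightarrow> pi/2"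
      have fl: "filterlim Sq (at_left (pi/2)) sequentially"
        by (rule tendsto_imp_filterlim_at_left[OF Sq(4)]) (use Sq(1) in auto)
      have "(\<lambda>n. LINT s|lborel. F1 (Sq n) s) \<longlonglongrightarrow> (LINT s|lborel. 2 * g s)"
      proof (rule integral_dominated_convergence[where w = w1])
        show "(\<lambda>s. 2 * g s) \<in> borel_measurable lborel" by measurable
        show "\<And>i. F1 (Sq i) \<in> borel_measurable lborel" by measurable
        show "integrable lborel w1" by (rule w1int)
        show "\<And>i. AE x in lborel. norm (F1 (Sq i) x) \<le> w1 x" using bound1 Sq by auto
        show "AE x in lborel. (\<lambda>i. F1 (Sq i) x) \<longlonglongrightarrow> 2 * g x"
        proof (rule AE_I2)
          fix x :: real
          show "(\<lambda>i. F1 (Sq i) x) \<longlonglongrightarrow> 2 * g x"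
          proof (cases "x \<in> S")
            case True
            then have x: "0 < x" "x < pi/2" by (auto simp: S_def)
            have "(\<lambda>n. kk (Sq n) x) \<longlonglongrightarrow> 2"
              using filterlim_compose[OF kk_lim[OF x] fl] by (simp add: kk_def)
            then have l: "(\<lambda>n. kk (Sq n) x * g x) \<longlonglongrightarrow> 2 * g x"
              by (intro tendsto_intros)
            have "(\<lambda>n. 2 * Sq n - pi/2) \<longlonglongrightarrow> 2 * (pi/2) - pi/2"
              by (intro tendsto_intros Sq(4))
            then have "\<forall>\<^sub>F n in sequentially. x < 2 * Sq n - pi/2"
              using x by (intro order_tendstoD(1)) auto
            then have "\<forall>\<^sub>F n in sequentially. kk (Sq n) x * g x = F1 (Sq n) x"
              by eventually_elim (use x in \<open>simp add: F1_def\<close>)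
            then show ?thesis using l by (rule Lim_transform_eventually[rotated])
          next
            case False
            then show ?thesis by (simp add: F1_def gz)
          qed
        qed
      qed
      then show "(\<lambda>n. LINT s|lborel. F1 (Sq n) s) \<longlonglongrightarrow> 2 * G" by (simp add: G_def)
    qed
    have "((\<lambda>\<sigma>. (LINT s|lborel. F1 \<sigma> s) + (LINT s|lborel. F2 \<sigma> s)) \<longlongrightarrow> 2 * G + 0) (at_left (pi/2))"
      by (intro tendsto_add lim1 lim2)
    moreover have "\<forall>\<^sub>F \<sigma> in at_left (pi/2). (LINT s|lborel. F1 \<sigma> s) + (LINT s|lborel. F2 \<sigma> s) = Q \<sigma>"
      using evb
    proof eventually_elim
      case (elim \<sigma>)
      then have \<sigma>: "b < \<sigma>" "\<sigma> < pi/2" by auto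
      have "Q \<sigma> = (LINT s|lborel. F1 \<sigma> s + F2 \<sigma> s)"
        unfolding Q_def using split \<sigma>(2) by simp
      also have "\<dots> = (LINT s|lborel. F1 \<sigma> s) + (LINT s|lborel. F2 \<sigma> s)"
        by (rule Bochner_Integration.integral_add[OF F1int[OF \<sigma>] F2int[OF \<sigma>]])
      finally show ?case by simp
    qed
    ultimately show ?thesis by (simp add: Lim_transform_eventually)
  qed
  define \<beta> where "\<beta> = 1 - 2 * G / (3 * pi)"
  have qlim: "((\<lambda>y. (\<eta> y - \<eta> (pi/2)) / (y - pi/2)) \<longlongrightarrow> \<beta>) (at_left (pi/2))"
  proof -
    have "((\<lambda>\<sigma>. 1 - Q \<sigma> / (3*pi)) \<longlongrightarrow> 1 - 2 * G / (3*pi)) (at_left (pi/2))"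
      by (intro tendsto_intros Qlim) simp
    moreover have "\<forall>\<^sub>F \<sigma> in at_left (pi/2). 1 - Q \<sigma> / (3*pi) = (\<eta> \<sigma> - \<eta> (pi/2)) / (\<sigma> - pi/2)"
      using ev0
      by (auto elim!: eventually_mono simp: quot)
    ultimately show ?thesis unfolding \<beta>_def by (rule Lim_transform_eventually)
  qed
  have deriv: "(\<eta> has_real_derivative \<beta>) (at_left (pi/2))"
    using qlim by (simp add: has_field_derivative_iff)
  have G0: "0 \<le> G" unfolding G_def using gb by (intro integral_nonneg_AE) (auto elim: eventually_mono)
  have GC: "G \<le> C * (pi/2)"
  proof -
    have "G \<le> (LINT s|lborel. indicator S s * C)"
      unfolding G_def
    proof (intro integral_mono_AE gint integrable_mult_left intS)
      show "AE x in lborel. g x \<le> indicator S x * C"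
        using gb by eventually_elim (use gz in \<open>auto simp: indicator_def\<close>)
    qed
    also have "\<dots> = C * (pi/2)" by (simp add: S_def)
    finally show ?thesis .
  qed
  have a0: "1 \<le> alpha0"
  proof -
    have "sqrt 8 \<le> sqrt (25::real)" by (subst real_sqrt_le_iff) simp
    also have "sqrt 25 = (5::real)" by simp
    finally have "sqrt 8 \<le> (5::real)" .
    then show ?thesis unfolding alpha0_def by simp
  qed
  have b1: "\<beta> \<le> 1" using G0 by (simp add: \<beta>_def)
  have b2: "1 - alpha0 / \<alpha> \<le> \<beta>"
  proof -
    have "2 * G / (3 * pi) \<le> 2 * (C * (pi/2)) / (3 * pi)" using GC by (intro divide_right_mono) auto
    also have "\<dots> = 1 / (\<alpha> * pi)" using alpha_pos by (simp add: C_def field_simps)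
    also have "\<dots> \<le> 1 / \<alpha>" using alpha_pos pi_gt3 by (simp add: field_simps)
    also have "\<dots> \<le> alpha0 / \<alpha>" using alpha_pos a0 by (simp add: divide_right_mono)
    finally show ?thesis by (simp add: \<beta>_def)
  qed
  have small: "(\<lambda>\<sigma>. \<eta> \<sigma> - (pi/2 - \<beta> * (pi/2 - \<sigma>))) \<in> o[at_left (pi/2)](\<lambda>\<sigma>. pi/2 - \<sigma>)"
  proof (rule smalloI_tendsto)
    have "((\<lambda>\<sigma>. \<beta> - (\<eta> \<sigma> - \<eta> (pi/2)) / (\<sigma> - pi/2)) \<longlongrightarrow> \<beta> - \<beta>) (at_left (pi/2))"
      by (intro tendsto_intros qlim)
    moreover have "\<forall>\<^sub>F \<sigma> in at_left (pi/2). \<beta> - (\<eta> \<sigma> - \<eta> (pi/2)) / (\<sigma> - pi/2)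
        = (\<eta> \<sigma> - (pi/2 - \<beta> * (pi/2 - \<sigma>))) / (pi/2 - \<sigma>)"
      using ev0
    proof (rule eventually_mono)
      fix \<sigma> :: real assume "\<sigma> \<in> {0<..<pi/2}"
      then have ne: "pi/2 - \<sigma> \<noteq> 0" "\<sigma> - pi/2 \<noteq> 0" by auto
      show "\<beta> - (\<eta> \<sigma> - \<eta> (pi/2)) / (\<sigma> - pi/2) = (\<eta> \<sigma> - (pi/2 - \<beta> * (pi/2 - \<sigma>))) / (pi/2 - \<sigma>)"
        using ne eta_pi2 by (simp add: field_simps)
    qed
    ultimately show "((\<lambda>\<sigma>. (\<eta> \<sigma> - (pi/2 - \<beta> * (pi/2 - \<sigma>))) / (pi/2 - \<sigma>)) \<longlongrightarrow> 0) (at_left (pi/2))"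
      by (simp add: Lim_transform_eventually)
    show "\<forall>\<^sub>F \<sigma> in at_left (pi/2). pi/2 - \<sigma> \<noteq> 0"
      using ev0 by (auto elim!: eventually_mono)
  qed
  show ?thesis using deriv b1 b2 small by blast
qed

end
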